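(* Let $n\ge 1$ and $q>1$. The maximum success probability of any restricted strategy for the New Hats-on-a-line Game with $q$ hat colours and $n$ players is $1-\left(\frac{q-1}{q}\right)^{n}$.
   Context: The New Hats-on-a-line Game with $q$ colours and $n$ players: players $P_1,\dots,P_n$ stand in a line, and each player $P_i$ receives a hat whose colour $c_i$ is chosen uniformly at random from a fixed set of $q$ colours, independently of the other hats. Player $P_i$ sees exactly the hat colours $c_{i+1},\dots,c_n$. The players respond sequentially in the order $P_1,\dots,P_n$; each response is either a colour (a guess of one's own hat colour) or "pass", and each player hears all previous responses. No other communication is allowed, apart from agreeing on a strategy beforehand. A strategy specifies (deterministically), for each player $P_i$, his response as a function of the colours he sees and the responses he has heard. The players win if at least one player guesses correctly and no player guesses incorrectly; the success probability of a strategy is the probability that the players win. A strategy is restricted if, for every configuration of hats $(c_1,\dots,c_n)$, any guess made by a player other than $P_1$ is correct. *)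

theory Defs
  imports Main Complex_Main
begin

text \<open>Colours are 0..q-1. Players P_1..P_n are indexed 0..n-1.
A hat configuration is a list cs of length n with entries < q (cs!i is the hat of player i).
A response is None (pass) or Some k (guess colour k).
A strategy S gives, for player i, his response S i seen heard, where seen = drop (i+1) cs
are the hats he sees and heard is the list of previous responses.\<close>

type_synonym strategy = "nat \<Rightarrow> nat list \<Rightarrow> nat option list \<Rightarrow> nat option"

definition configs :: "nat \<Rightarrow> nat \<Rightarrow> nat list set" where
  "configs q n = {cs. length cs = n \<and> set cs \<subseteq> {..<q}}"

fun resps :: "strategy \<Rightarrow> nat list \<Rightarrow> nat \<Rightarrow> nat option list" where
  "resps S cs 0 = []"
| "resps S cs (Suc k) = resps S cs k @ [S k (drop (Suc k) cs) (resps S cs k)]"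

definition valid_strategy :: "nat \<Rightarrow> strategy \<Rightarrow> bool" where
  "valid_strategy q S \<longleftrightarrow> (\<forall>i seen heard. case S i seen heard of None \<Rightarrow> True | Some k \<Rightarrow> k < q)"

definition wins :: "nat \<Rightarrow> strategy \<Rightarrow> nat list \<Rightarrow> bool" where
  "wins n S cs \<longleftrightarrow>
     (let r = resps S cs n in
       (\<exists>i<n. r ! i = Some (cs ! i)) \<and> (\<forall>i<n. r ! i \<noteq> None \<longrightarrow> r ! i = Some (cs ! i)))"

definition success_prob :: "nat \<Rightarrow> nat \<Rightarrow> strategy \<Rightarrow> real" where
  "success_prob q n S = real (card {cs \<in> configs q n. wins n S cs}) / real (card (configs q n))"

definition restricted :: "nat \<Rightarrow> nat \<Rightarrow> strategy \<Rightarrow> bool" where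
  "restricted q n S \<longleftrightarrow>
     (\<forall>cs \<in> configs q n. \<forall>i. 0 < i \<and> i < n \<longrightarrow>
        resps S cs n ! i \<noteq> None \<longrightarrow> resps S cs n ! i = Some (cs ! i))"

end

theory Submission
  imports Defs
begin

lemma configs_alt: "configs q n = {xs. set xs \<subseteq> {..<q} \<and> length xs = n}"
  unfolding configs_def by auto

lemma finite_configs: "finite (configs q n)"
  unfolding configs_alt by (rule finite_lists_length_eq) simp

lemma card_configs: "card (configs q n) = q ^ n"
  unfolding configs_alt by (subst card_lists_length_eq) simp_all

lemma length_resps[simp]: "length (resps S cs k) = k"
  by (induction k) auto

lemma resps_Cons:
  "resps S (c # u) (Suc k) =
     S 0 u [] # resps (\<lambda>i seen heard. S (Suc i) seen (S 0 u [] # heard)) u k"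
  by (induction k) auto

lemma Cons_configs: "c # u \<in> configs q (Suc m) \<longleftrightarrow> c < q \<and> u \<in> configs q m"
  unfolding configs_def by auto

lemma main_bound:
  assumes "q \<ge> 1"
  shows "\<And>S P. P \<subseteq> configs q m \<Longrightarrow>
    (\<forall>t\<in>P. \<forall>i. 0 < i \<and> i < m \<longrightarrow> resps S t m ! i \<noteq> None \<longrightarrow> resps S t m ! i = Some (t ! i))
    \<Longrightarrow> card {t\<in>P. wins m S t} + (q - 1) ^ m \<le> q ^ m"
proof (induction m)
  case 0
  have "{t\<in>P. wins 0 S t} = {}" by (auto simp: wins_def)
  then show ?case by (simp only:) simp
next
  case (Suc m)
  define S' where "S' = (\<lambda>i seen heard. S (Suc i) seen (None # heard))"
  define P' where "P' = {u \<in> configs q m. S 0 u [] = None \<and> (\<exists>c. c # u \<in> P)}"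
  define A where "A = {u \<in> configs q m. S 0 u [] \<noteq> None}"
  define L where "L = {u \<in> P'. wins m S' u}"
  have P'c: "P' \<subseteq> configs q m" unfolding P'_def by auto
  have hypP': "\<forall>t\<in>P'. \<forall>i. 0 < i \<and> i < m \<longrightarrow> resps S' t m ! i \<noteq> None \<longrightarrow> resps S' t m ! i = Some (t ! i)"
  proof (intro ballI allI impI)
    fix u i assume u: "u \<in> P'" and i: "0 < i \<and> i < m" and ne: "resps S' u m ! i \<noteq> None"
    from u obtain c where cu: "c # u \<in> P" and s0: "S 0 u [] = None" unfolding P'_def by auto
    have r: "resps S (c # u) (Suc m) = None # resps S' u m"
      using resps_Cons[of S c u m] s0 unfolding S'_def by simp
    from Suc.prems(2) cu i have "resps S (c#u) (Suc m) ! Suc i \<noteq> None \<longrightarrow> resps S (c#u) (Suc m) ! Suc i = Some ((c#u) ! Suc i)"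
      by (metis zero_less_Suc Suc_mono)
    with ne r show "resps S' u m ! i = Some (u ! i)" by simp
  qed
  have IH: "card L + (q - 1) ^ m \<le> q ^ m"
    unfolding L_def by (rule Suc.IH[OF P'c hypP'])
  have fin: "finite A" "finite L"
    using finite_configs[of q m] unfolding A_def L_def P'_def
    by (auto intro: finite_subset)
  have disj: "A \<inter> L = {}" unfolding A_def L_def P'_def by auto
  have "A \<union> L \<subseteq> configs q m" unfolding A_def L_def P'_def by auto
  then have "card (A \<union> L) \<le> q ^ m"
    using card_mono[OF finite_configs] card_configs by metis
  then have AL: "card A + card L \<le> q ^ m" using card_Un_disjoint[OF fin disj] by simp
  have sub: "{t\<in>P. wins (Suc m) S t} \<subseteq>
     (\<lambda>u. the (S 0 u []) # u) ` A \<union> (\<lambda>(c,u). c # u) ` ({..<q} \<times> L)"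
  proof
    fix t assume t: "t \<in> {t\<in>P. wins (Suc m) S t}"
    then have tP: "t \<in> P" and w: "wins (Suc m) S t" by auto
    with Suc.prems(1) have "t \<in> configs q (Suc m)" by auto
    then obtain c u where tcu: "t = c # u" by (cases t) (auto simp: configs_def)
    with \<open>t \<in> configs q (Suc m)\<close> have cq: "c < q" and uc: "u \<in> configs q m"
      by (auto simp: Cons_configs)
    show "t \<in> (\<lambda>u. the (S 0 u []) # u) ` A \<union> (\<lambda>(c,u). c # u) ` ({..<q} \<times> L)"
    proof (cases "S 0 u []")
      case None
      have r: "resps S (c # u) (Suc m) = None # resps S' u m"
        using resps_Cons[of S c u m] None unfolding S'_def by simp
      have "wins m S' u"
      proof -
        from w obtain i where i: "i < Suc m" "resps S t (Suc m) ! i = Some (t ! i)"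
          unfolding wins_def Let_def by auto
        from w have all: "\<forall>i<Suc m. resps S t (Suc m) ! i \<noteq> None \<longrightarrow> resps S t (Suc m) ! i = Some (t ! i)"
          unfolding wins_def Let_def by auto
        from i r tcu obtain j where j: "i = Suc j" "j < m" "resps S' u m ! j = Some (u ! j)"
          by (cases i) auto
        have "\<forall>j<m. resps S' u m ! j \<noteq> None \<longrightarrow> resps S' u m ! j = Some (u ! j)"
        proof (intro allI impI)
          fix j assume "j < m" "resps S' u m ! j \<noteq> None"
          with all[rule_format, of "Suc j"] r tcu show "resps S' u m ! j = Some (u ! j)" by simp
        qed
        with j show ?thesis unfolding wins_def Let_def by auto
      qed
      moreover have "u \<in> P'" using uc None tP tcu unfolding P'_def by auto
      ultimately have "u \<in> L" unfolding L_def by auto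
      with cq tcu show ?thesis by force
    next
      case (Some k)
      have r: "resps S (c # u) (Suc m) ! 0 = Some k"
        using resps_Cons[of S c u m] Some by simp
      from w have "resps S t (Suc m) ! 0 \<noteq> None \<longrightarrow> resps S t (Suc m) ! 0 = Some (t ! 0)"
        unfolding wins_def Let_def by auto
      with r tcu have "k = c" by simp
      moreover have "u \<in> A" using uc Some unfolding A_def by auto
      ultimately show ?thesis using tcu Some by force
    qed
  qed
  have "card {t\<in>P. wins (Suc m) S t} \<le> card ((\<lambda>u. the (S 0 u []) # u) ` A \<union> (\<lambda>(c,u). c # u) ` ({..<q} \<times> L))"
    by (rule card_mono[OF _ sub]) (use fin in auto)
  also have "\<dots> \<le> card ((\<lambda>u. the (S 0 u []) # u) ` A) + card ((\<lambda>(c,u). c # u) ` ({..<q} \<times> L))"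
    by (rule card_Un_le)
  also have "\<dots> \<le> card A + card ({..<q} \<times> L)"
    by (intro add_mono card_image_le) (use fin in auto)
  also have "\<dots> = card A + q * card L" by (simp add: card_cartesian_product)
  finally have W: "card {t\<in>P. wins (Suc m) S t} \<le> card A + q * card L" .
  have "q * card L = card L + (q - 1) * card L" using assms
    by (metis Suc_diff_1 le_add_diff_inverse2 mult.commute mult_Suc_right not_one_le_zero zero_less_iff_neq_zero add.commute)
  then have "card {t\<in>P. wins (Suc m) S t} + (q - 1) ^ Suc m \<le> card A + card L + (q - 1) * (card L + (q - 1) ^ m)"
    using W by (simp add: algebra_simps)
  also have "\<dots> \<le> q ^ m + (q - 1) * q ^ m"
    using AL IH by (intro add_mono mult_left_mono) auto
  also have "\<dots> = q ^ Suc m" using assms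
    by (metis Suc_diff_1 mult_Suc not_one_le_zero zero_less_iff_neq_zero power_Suc)
  finally show ?case .
qed


definition Z :: strategy where
  "Z = (\<lambda>i seen heard. if (\<forall>x\<in>set heard. x = None) \<and> 0 \<notin> set seen then Some 0 else None)"

definition g :: "nat list \<Rightarrow> nat" where
  "g cs = Max ({j. j < length cs \<and> cs ! j = 0} \<union> {0})"

lemma g_fin: "finite ({j. j < length cs \<and> cs ! j = 0} \<union> {0})" by auto

lemma g_in: "g cs \<in> {j. j < length cs \<and> cs ! j = 0} \<union> {0}"
  unfolding g_def by (rule Max_in[OF g_fin]) auto

lemma g_le_iff: "g cs \<le> k \<longleftrightarrow> (\<forall>j. j < length cs \<and> cs ! j = 0 \<longrightarrow> j \<le> k)"
  unfolding g_def by (subst Max_le_iff[OF g_fin]) auto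

lemma zero_drop: "0 \<in> set (drop (Suc k) cs) \<longleftrightarrow> (\<exists>j. Suc k \<le> j \<and> j < length cs \<and> cs ! j = 0)"
proof
  assume "0 \<in> set (drop (Suc k) cs)"
  then obtain i where "i < length (drop (Suc k) cs)" "drop (Suc k) cs ! i = 0"
    by (auto simp: in_set_conv_nth)
  then show "\<exists>j. Suc k \<le> j \<and> j < length cs \<and> cs ! j = 0"
    by (intro exI[of _ "Suc k + i"]) auto
next
  assume "\<exists>j. Suc k \<le> j \<and> j < length cs \<and> cs ! j = 0"
  then obtain j where j: "Suc k \<le> j" "j < length cs" "cs ! j = 0" by auto
  then have "drop (Suc k) cs ! (j - Suc k) = 0" "j - Suc k < length (drop (Suc k) cs)" by auto
  then show "0 \<in> set (drop (Suc k) cs)" by (metis nth_mem)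
qed

lemma resps_Z: "k \<le> length cs \<Longrightarrow> resps Z cs k = map (\<lambda>m. if m = g cs then Some 0 else None) [0..<k]"
proof (induction k)
  case 0 then show ?case by simp
next
  case (Suc k)
  have h: "(\<forall>x\<in>set (map (\<lambda>m. if m = g cs then Some 0 else (None::nat option)) [0..<k]). x = None) \<longleftrightarrow> k \<le> g cs"
    by (auto simp: not_less[symmetric])
  have d: "0 \<notin> set (drop (Suc k) cs) \<longleftrightarrow> g cs \<le> k"
    unfolding zero_drop g_le_iff by auto
  show ?case using Suc h d by (auto simp: Z_def)
qed


lemma g_less: "length cs \<ge> 1 \<Longrightarrow> g cs < length cs"
  using g_in[of cs] by auto

lemma wins_Z: assumes "length cs = n" "n \<ge> 1" shows "wins n Z cs \<longleftrightarrow> 0 \<in> set cs"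
proof -
  have r: "\<And>i. i < n \<Longrightarrow> resps Z cs n ! i = (if i = g cs then Some 0 else None)"
    using assms by (simp add: resps_Z)
  have gl: "g cs < n" using g_less assms by auto
  have "wins n Z cs \<longleftrightarrow> cs ! g cs = 0"
  proof
    assume "wins n Z cs"
    then obtain i where "i < n" "resps Z cs n ! i = Some (cs ! i)" unfolding wins_def Let_def by blast
    with r show "cs ! g cs = 0" by (auto split: if_splits)
  next
    assume h: "cs ! g cs = 0"
    have "resps Z cs n ! g cs = Some (cs ! g cs)" using r gl h by simp
    moreover have "\<forall>i<n. resps Z cs n ! i \<noteq> None \<longrightarrow> resps Z cs n ! i = Some (cs ! i)"
      using r h by auto
    ultimately show "wins n Z cs" unfolding wins_def Let_def using gl by blast
  qed
  also have "\<dots> \<longleftrightarrow> 0 \<in> set cs"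
  proof
    assume "cs ! g cs = 0" then show "0 \<in> set cs" using gl assms by (metis nth_mem)
  next
    assume "0 \<in> set cs"
    then obtain j where j: "j < length cs" "cs ! j = 0" by (auto simp: in_set_conv_nth)
    then have "j \<le> g cs" using g_le_iff[of cs "g cs"] by auto
    then show "cs ! g cs = 0" using g_in[of cs] j by auto
  qed
  finally show ?thesis .
qed

lemma Z_valid: "q > 0 \<Longrightarrow> valid_strategy q Z"
  unfolding valid_strategy_def Z_def by auto

lemma Z_restricted: assumes "n \<ge> 1" shows "restricted q n Z"
  unfolding restricted_def
proof (intro ballI allI impI)
  fix cs i assume cs: "cs \<in> configs q n" and i: "0 < i \<and> i < n" and ne: "resps Z cs n ! i \<noteq> None"
  have len: "length cs = n" using cs by (simp add: configs_def)
  have r: "resps Z cs n ! i = (if i = g cs then Some 0 else None)"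
    using len i by (simp add: resps_Z)
  with ne have "i = g cs" by (auto split: if_splits)
  with g_in[of cs] i len have "cs ! i = 0" by auto
  with r \<open>i = g cs\<close> show "resps Z cs n ! i = Some (cs ! i)" by simp
qed


lemma card_Z_wins: assumes "n \<ge> 1" shows "card {cs \<in> configs q n. wins n Z cs} + (q - 1) ^ n = q ^ n"
proof -
  have eq: "{cs \<in> configs q n. wins n Z cs} = {cs \<in> configs q n. 0 \<in> set cs}"
    using wins_Z assms by (auto simp: configs_def)
  have lose: "{cs \<in> configs q n. 0 \<notin> set cs} = {xs. set xs \<subseteq> {1..<q} \<and> length xs = n}"
  proof -
    have "\<And>xs::nat list. (set xs \<subseteq> {..<q} \<and> 0 \<notin> set xs) = (set xs \<subseteq> {1..<q})"
      by (auto simp: subset_iff Suc_le_eq) (metis gr0I)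
    then show ?thesis unfolding configs_def by blast
  qed
  have cl: "card {cs \<in> configs q n. 0 \<notin> set cs} = (q - 1) ^ n"
    unfolding lose by (subst card_lists_length_eq) auto
  have "configs q n = {cs \<in> configs q n. 0 \<in> set cs} \<union> {cs \<in> configs q n. 0 \<notin> set cs}" by auto
  then have "q ^ n = card ({cs \<in> configs q n. 0 \<in> set cs} \<union> {cs \<in> configs q n. 0 \<notin> set cs})"
    using card_configs by metis
  also have "\<dots> = card {cs \<in> configs q n. 0 \<in> set cs} + card {cs \<in> configs q n. 0 \<notin> set cs}"
    by (rule card_Un_disjoint) (use finite_configs in auto)
  finally show ?thesis using eq cl by simp
qed

theorem lemma5:
  fixes q n :: nat
  assumes "n \<ge> 1" and "q > 1"
  shows "(\<forall>S. valid_strategy q S \<and> restricted q n S \<longrightarrow>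
            success_prob q n S \<le> 1 - ((real q - 1) / real q) ^ n)
       \<and> (\<exists>S. valid_strategy q S \<and> restricted q n S \<and>
            success_prob q n S = 1 - ((real q - 1) / real q) ^ n)"
proof -
  have qpos: "real q > 0" using assms by simp
  have rq: "real q - 1 = real (q - 1)" using assms by simp
  have qnpos: "real q ^ n > 0" using qpos by simp
  have e: "1 - ((real q - 1) / real q) ^ n = (real q ^ n - real (q-1) ^ n) / real q ^ n"
  proof -
    have "1 - ((real q - 1) / real q) ^ n = 1 - real (q-1) ^ n / real q ^ n"
      unfolding rq power_divide by (rule refl)
    also have "\<dots> = (real q ^ n - real (q-1) ^ n) / real q ^ n"
      using qnpos by (simp add: diff_divide_distrib)
    finally show ?thesis .
  qed
  have qn: "real (q ^ n) = real q ^ n" by simp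
  have key: "\<And>W::nat. real W / real (q ^ n) = 1 - ((real q - 1) / real q) ^ n \<longleftrightarrow> W + (q - 1) ^ n = q ^ n"
  proof -
    fix W :: nat
    have "real W / real (q ^ n) = 1 - ((real q - 1) / real q) ^ n \<longleftrightarrow>
          real W = real q ^ n - real (q - 1) ^ n"
      unfolding e qn using qnpos assms by (simp add: divide_cancel_right)
    also have "\<dots> \<longleftrightarrow> real (W + (q - 1) ^ n) = real (q ^ n)" by (simp only: of_nat_add of_nat_power) linarith
    also have "\<dots> \<longleftrightarrow> W + (q - 1) ^ n = q ^ n" by (rule of_nat_eq_iff)
    finally show "?thesis W" .
  qed
  have keyle: "\<And>W::nat. W + (q - 1) ^ n \<le> q ^ n \<Longrightarrow> real W / real (q ^ n) \<le> 1 - ((real q - 1) / real q) ^ n"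
  proof -
    fix W :: nat assume h: "W + (q - 1) ^ n \<le> q ^ n"
    then have "real W + real (q-1) ^ n \<le> real q ^ n" by (metis of_nat_add of_nat_le_iff of_nat_power)
    then have "real W \<le> real q ^ n - real (q-1) ^ n" by linarith
    then show "real W / real (q ^ n) \<le> 1 - ((real q - 1) / real q) ^ n"
      unfolding e qn using qnpos by (simp add: divide_right_mono)
  qed
  show ?thesis
  proof
    show "\<forall>S. valid_strategy q S \<and> restricted q n S \<longrightarrow>
            success_prob q n S \<le> 1 - ((real q - 1) / real q) ^ n"
    proof (intro allI impI)
      fix S assume "valid_strategy q S \<and> restricted q n S"
      then have "restricted q n S" by simp
      then have "card {t\<in>configs q n. wins n S t} + (q - 1) ^ n \<le> q ^ n"
        using assms by (intro main_bound) (auto simp: restricted_def)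
      then show "success_prob q n S \<le> 1 - ((real q - 1) / real q) ^ n"
        unfolding success_prob_def card_configs by (rule keyle)
    qed
    show "\<exists>S. valid_strategy q S \<and> restricted q n S \<and>
            success_prob q n S = 1 - ((real q - 1) / real q) ^ n"
      using Z_valid Z_restricted card_Z_wins assms key
      unfolding success_prob_def card_configs by (intro exI[of _ Z]) auto
  qed
qed


end
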